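(* Consider a one-step MDP ($T=1$) with a single state $\mathcal{S}=\{s_0\}$, action space equal to the goal space $\mathcal{A}=\mathcal{G}$ with $|\mathcal{A}|=|\mathcal{G}|=k$, and reward $r(s,a,g)=\mathbb{I}[a=g]$. Let the policy be $\pi(a\mid s_0,g)=\exp(L_{a,g})/\sum_{b\in\mathcal{A}}\exp(L_{b,g})$ with logits $L_{a,g}$, let $p(g)=1/k$ for all $g$, and suppose $L_{a,g}\equiv L$ for all $a,g$ (some constant $L$). Let $\eta_{a,g}=r(s_0,b,g')\frac{\partial}{\partial L_{a,g}}\log\pi(b\mid s_0,g')$ with $g'\sim p(\cdot)$, $b\sim\pi(\cdot\mid s_0,g')$ be the one-sample on-policy REINFORCE estimator. Let the hindsight variational distribution $q_h$ (with an on-policy buffer) generate a pair $(b,g')$ as follows: sample $g\sim p(\cdot)$ and $b\sim\pi(\cdot\mid s_0,g)$, then choose the goal $g'$ for which the sampled action is rewarding, i.e. $r(s_0,b,g')=1$ (so $g'=b$). Define the normalized hindsight estimator $\eta^h_{a,g}=r(s_0,b,g')\,\frac{\partial}{\partial L_{a,g}}\log\pi(b\mid s_0,g')/k$ with $(b,g')\sim q_h$. For a random variable $x$ define $\mathrm{MSE}[x]:=\mathbb{E}[(x-\mathbb{E}[\eta_{a,g}])^2]$. Then for every $a\in\mathcal{A}$ and $g\in\mathcal{G}$, as $k\to\infty$, $$\frac{\sqrt{\mathrm{MSE}[\eta^h_{a,g}]}}{\big|\mathbb{E}[\eta_{a,g}]\big|}=\sqrt{k}\,(1+o(1)).$$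
   Context: $o(1)$ denotes a quantity tending to $0$ as $k\to\infty$. *)

theory Defs
  imports "HOL-Analysis.Analysis"
begin

text \<open>One-step MDP with a single state s0; actions = goals = {0..<k}.
  Logits are a function L :: nat \<times> nat \<Rightarrow> real, L(a,g) = L_{a,g}.\<close>

definition rew :: "nat \<Rightarrow> nat \<Rightarrow> real" where
  "rew b g = (if b = g then 1 else 0)"

definition pol :: "nat \<Rightarrow> (nat \<times> nat \<Rightarrow> real) \<Rightarrow> nat \<Rightarrow> nat \<Rightarrow> real" where
  "pol k L b g = exp (L (b, g)) / (\<Sum>c<k. exp (L (c, g)))"

definition score :: "nat \<Rightarrow> (nat \<times> nat \<Rightarrow> real) \<Rightarrow> nat \<Rightarrow> nat \<Rightarrow> nat \<Rightarrow> nat \<Rightarrow> real" where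
  "score k L a g b g' = deriv (\<lambda>t. ln (pol k (L((a, g) := t)) b g')) (L (a, g))"

definition prior :: "nat \<Rightarrow> nat \<Rightarrow> real" where
  "prior k g = 1 / real k"

definition eta :: "nat \<Rightarrow> (nat \<times> nat \<Rightarrow> real) \<Rightarrow> nat \<Rightarrow> nat \<Rightarrow> nat \<Rightarrow> nat \<Rightarrow> real" where
  "eta k L a g b g' = rew b g' * score k L a g b g'"

definition E_eta :: "nat \<Rightarrow> (nat \<times> nat \<Rightarrow> real) \<Rightarrow> nat \<Rightarrow> nat \<Rightarrow> real" where
  "E_eta k L a g = (\<Sum>g'<k. \<Sum>b<k. prior k g' * pol k L b g' * eta k L a g b g')"

text \<open>Hindsight distribution q_h over pairs (b, g'): sample g ~ p, b ~ pi(.|s0,g),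
  then relabel the goal to the (unique) g' with r(s0,b,g') = 1, i.e. g' = b.\<close>
definition qh :: "nat \<Rightarrow> (nat \<times> nat \<Rightarrow> real) \<Rightarrow> nat \<Rightarrow> nat \<Rightarrow> real" where
  "qh k L b g' = (\<Sum>g<k. prior k g * pol k L b g) * (if g' = b then 1 else 0)"

definition eta_h :: "nat \<Rightarrow> (nat \<times> nat \<Rightarrow> real) \<Rightarrow> nat \<Rightarrow> nat \<Rightarrow> nat \<Rightarrow> nat \<Rightarrow> real" where
  "eta_h k L a g b g' = rew b g' * score k L a g b g' / real k"

definition MSE_h :: "nat \<Rightarrow> (nat \<times> nat \<Rightarrow> real) \<Rightarrow> nat \<Rightarrow> nat \<Rightarrow> real" where
  "MSE_h k L a g = (\<Sum>b<k. \<Sum>g'<k. qh k L b g' * (eta_h k L a g b g' - E_eta k L a g)\<^sup>2)"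

end

theory Submission
  imports Defs
begin

lemma sum_if_one:
  assumes "a < (k::nat)"
  shows "(\<Sum>x<k. (if x = a then A else B)) = A + (real k - 1) * (B::real)"
proof -
  have "(\<Sum>x<k. (if x = a then A else B)) = (\<Sum>x<k. B + (if x = a then A - B else 0))"
    by (rule sum.cong) auto
  also have "\<dots> = real k * B + (A - B)" using assms by (simp add: sum.distrib)
  finally show ?thesis by (simp add: algebra_simps)
qed

lemma score_const:
  assumes "a < k" "b < k"
  shows "score k (\<lambda>_. c) a g b g' =
     (if g' = g then (if b = a then 1 else 0) - 1 / real k else 0)"
proof (cases "g' = g")
  case False
  have "(\<lambda>t. ln (pol k ((\<lambda>_. c)((a, g) := t)) b g')) = (\<lambda>t. ln (pol k (\<lambda>_. c) b g'))"
    using False by (simp add: pol_def)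
  then show ?thesis using False by (simp add: score_def)
next
  case True
  have k1: "real k \<ge> 1" using assms by simp
  define S where "S t = exp t + (real k - 1) * exp c" for t
  have Spos: "S t > 0" for t unfolding S_def using k1
    by (intro add_pos_nonneg) auto
  have sumeq: "(\<Sum>x<k. exp (((\<lambda>_. c)((a, g) := t)) (x, g))) = S t" for t
  proof -
    have "(\<Sum>x<k. exp (((\<lambda>_. c)((a, g) := t)) (x, g))) = (\<Sum>x<k. (if x = a then exp t else exp c))"
      by (rule sum.cong) auto
    then show ?thesis using sum_if_one[OF assms(1)] S_def by simp
  qed
  have feq: "(\<lambda>t. ln (pol k ((\<lambda>_. c)((a, g) := t)) b g')) =
        (\<lambda>t. (if b = a then t else c) - ln (S t))"
  proof
    fix t
    have "pol k ((\<lambda>_. c)((a, g) := t)) b g' = exp (if b = a then t else c) / S t"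
      using True sumeq[of t] by (simp add: pol_def)
    then show "ln (pol k ((\<lambda>_. c)((a, g) := t)) b g') = (if b = a then t else c) - ln (S t)"
      using Spos[of t] by (simp add: ln_div)
  qed
  have dS: "(S has_real_derivative exp t) (at t)" for t
    unfolding S_def by (auto intro!: derivative_eq_intros)
  have Sc: "S c \<noteq> 0" using Spos[of c] by simp
  have d: "((\<lambda>t. (if b = a then t else c) - ln (S t)) has_real_derivative
      ((if b = a then 1 else 0) - exp c / S c)) (at c)"
  proof (cases "b = a")
    case True
    show ?thesis using True
      by (auto intro!: derivative_eq_intros dS[of c] simp: Sc Spos divide_simps)
  next
    case False
    show ?thesis using False
      by (auto intro!: derivative_eq_intros dS[of c] simp: Sc Spos divide_simps)
  qed
  have "S c = real k * exp c" unfolding S_def by (simp add: algebra_simps)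
  then have "exp c / S c = 1 / real k" using k1 by simp
  then show ?thesis using True d feq unfolding score_def
    by (simp add: DERIV_imp_deriv)
qed

lemma pol_const: "a < k \<Longrightarrow> pol k (\<lambda>_. c) b g' = 1 / real k"
  by (simp add: pol_def)

lemma E_const:
  assumes "a < k" "g < k"
  shows "E_eta k (\<lambda>_. c) a g = ((if g = a then 1 else 0) - 1 / real k) / (real k)^2"
proof -
  define s where "s = (if g = a then 1 else 0) - 1 / real k"
  have "E_eta k (\<lambda>_. c) a g = (\<Sum>g'<k. \<Sum>b<k. (if g' = g then (if b = g then s / (real k)^2 else 0) else 0))"
    unfolding E_eta_def
    by (intro sum.cong refl) (auto simp: pol_const[OF assms(1)] prior_def eta_def rew_def
        score_const[OF assms(1)] power2_eq_square s_def)
  also have "\<dots> = (\<Sum>g'<k. (if g' = g then s / (real k)^2 else 0))"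
    by (intro sum.cong refl) (use assms in auto)
  also have "\<dots> = s / (real k)^2" using assms by simp
  finally show ?thesis by (simp add: s_def)
qed

lemma MSE_const:
  assumes "a < k" "g < k"
  defines "s \<equiv> (if g = a then 1 else 0) - 1 / real k"
  shows "MSE_h k (\<lambda>_. c) a g = s^2 * (real k - 1) / (real k)^4"
proof -
  have k1: "real k \<ge> 1" using assms by simp
  let ?E = "s / (real k)^2"
  have E: "E_eta k (\<lambda>_. c) a g = ?E" using E_const[OF assms(1,2)] s_def by simp
  have qh: "qh k (\<lambda>_. c) b g' = (1 / real k) * (if g' = b then 1 else 0)" for b g'
  proof -
    have "(\<Sum>g<k. prior k g * pol k (\<lambda>_. c) b g) = real k * (1 / real k * (1 / real k))"
      using assms by (simp add: prior_def pol_const)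
    also have "\<dots> = 1 / real k" using k1 by simp
    finally show ?thesis by (simp add: qh_def)
  qed
  have "MSE_h k (\<lambda>_. c) a g = (\<Sum>b<k. \<Sum>g'<k. (if g' = b then (1 / real k) * ((if b = g then s / real k else 0) - ?E)^2 else 0))"
    unfolding MSE_h_def E
    by (intro sum.cong refl) (auto simp: qh eta_h_def rew_def score_const[OF assms(1)] s_def)
  also have "\<dots> = (\<Sum>b<k. (1 / real k) * (if b = g then (s / real k - ?E)^2 else ?E^2))"
    by (intro sum.cong refl) auto
  also have "\<dots> = (1 / real k) * ((s / real k - ?E)^2 + (real k - 1) * ?E^2)"
    by (subst sum_distrib_left[symmetric]) (simp only: sum_if_one[OF assms(2)])
  also have "\<dots> = s^2 * (real k - 1) / (real k)^4"
    using k1 by (simp add: field_simps power2_eq_square) (simp add: algebra_simps power4_eq_xxxx)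
  finally show ?thesis .
qed

lemma ratio_const:
  assumes "a < k" "g < k" "k \<ge> 2"
  shows "(sqrt (MSE_h k (\<lambda>_. c) a g) / \<bar>E_eta k (\<lambda>_. c) a g\<bar>) / sqrt (real k) = sqrt (1 - 1 / real k)"
proof -
  define s where "s = (if g = a then 1 else 0) - 1 / real (k::nat)"
  have k2: "real k \<ge> 2" using assms by simp
  have sne: "s \<noteq> 0" using k2 by (auto simp: s_def field_simps)
  have M: "MSE_h k (\<lambda>_. c) a g = s^2 * (real k - 1) / (real k)^4"
    using MSE_const[OF assms(1,2)] s_def by simp
  have E: "E_eta k (\<lambda>_. c) a g = s / (real k)^2"
    using E_const[OF assms(1,2)] s_def by simp
  have "(real k)^4 = ((real k)^2)^2" by simp
  then have sq4: "sqrt ((real k)^4) = (real k)^2" by (simp only: real_sqrt_abs) simp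
  have "sqrt (MSE_h k (\<lambda>_. c) a g) = \<bar>s\<bar> * sqrt (real k - 1) / (real k)^2"
    unfolding M by (simp add: real_sqrt_mult real_sqrt_divide sq4)
  then have "(sqrt (MSE_h k (\<lambda>_. c) a g) / \<bar>E_eta k (\<lambda>_. c) a g\<bar>) / sqrt (real k)
      = sqrt (real k - 1) / sqrt (real k)"
    unfolding E using sne k2 by (simp add: field_simps abs_divide)
  also have "\<dots> = sqrt (1 - 1 / real k)"
    using k2 by (simp add: real_sqrt_divide[symmetric] field_simps)
  finally show ?thesis .
qed

lemma sqrt_close:
  assumes "x \<ge> 2"
  shows "\<bar>sqrt (1 - 1 / x) - 1\<bar> \<le> 1 / x"
proof -
  have x0: "0 \<le> 1 - 1/x" "1 - 1/x \<le> 1" using assms by (auto simp: field_simps)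
  have "1 - 1/x \<le> sqrt (1 - 1/x)"
  proof -
    have "(1 - 1/x) * (1 - 1/x) \<le> 1 - 1/x" using x0 by (intro mult_left_le) auto
    then have "sqrt ((1 - 1/x) * (1 - 1/x)) \<le> sqrt (1 - 1/x)" by (rule real_sqrt_le_mono)
    then show ?thesis using x0 by simp
  qed
  moreover have "sqrt (1 - 1/x) \<le> 1" using x0 by simp
  ultimately show ?thesis by linarith
qed

theorem theorem2:
  fixes c :: real
  shows "\<forall>\<epsilon>>0. \<forall>\<^sub>F k in sequentially. \<forall>a<k. \<forall>g<k.
           \<bar>(sqrt (MSE_h k (\<lambda>_. c) a g) / \<bar>E_eta k (\<lambda>_. c) a g\<bar>) / sqrt (real k) - 1\<bar> < \<epsilon>"
proof (intro allI impI)
  fix \<epsilon> :: real assume ep: "\<epsilon> > 0"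
  define N where "N = nat \<lceil>1 / \<epsilon>\<rceil> + 2"
  show "\<forall>\<^sub>F k in sequentially. \<forall>a<k. \<forall>g<k.
           \<bar>(sqrt (MSE_h k (\<lambda>_. c) a g) / \<bar>E_eta k (\<lambda>_. c) a g\<bar>) / sqrt (real k) - 1\<bar> < \<epsilon>"
    using eventually_ge_at_top[of N]
  proof eventually_elim
    case (elim k)
    have k2: "k \<ge> 2" using elim N_def by simp
    have "real k > 1 / \<epsilon>" using elim unfolding N_def by linarith
    then have ke: "1 / real k < \<epsilon>" using ep k2
      by (simp add: divide_less_eq mult.commute)
    show ?case
    proof (intro allI impI)
      fix a g assume "a < k" "g < k"
      show "\<bar>(sqrt (MSE_h k (\<lambda>_. c) a g) / \<bar>E_eta k (\<lambda>_. c) a g\<bar>) / sqrt (real k) - 1\<bar> < \<epsilon>"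
        unfolding ratio_const[OF \<open>a < k\<close> \<open>g < k\<close> k2]
        using sqrt_close[of "real k"] k2 ke by simp
    qed
  qed
qed

end
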